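(* Let $F$ be the elementary cellular automaton with rule number 44. For every nonempty finite word $u\in\{0,1\}^*$, the deterministic communication complexity of $\textsc{SInv}_{F,u}$ restricted to inputs of length $n$ is bounded by a constant independent of $n$.
   Context: An elementary cellular automaton (ECA) with rule number $N\in\{0,\dots,255\}$ is the map $F:\{0,1\}^{\mathbb Z}\to\{0,1\}^{\mathbb Z}$ given by $F(x)_i=f(x_{i-1},x_i,x_{i+1})$. Here the local rule $f:\{0,1\}^3\to\{0,1\}$ is determined by $N=\sum_{a,b,c\in\{0,1\}}2^{4a+2b+c}f(a,b,c)$. For a nonempty finite word $u$, $p_u\in\{0,1\}^{\mathbb Z}$ is defined by $(p_u)_i=u_{i\bmod |u|}$. For a finite word $x$, $p_u[x]$ is the configuration equal to $x$ on positions $0,\dots,|x|-1$ and to $p_u$ elsewhere. $\textsc{SInv}_{F,u}$ is the decision problem: on input a finite word $x$, decide whether there is an integer $w$ such that for all $t\ge0$ the set of positions where $F^t(p_u)$ and $F^t(p_u[x])$ differ is contained in an interval of length $w$. For each $n$, it is regarded as a function $\{0,1\}^n\to\{0,1\}$. For a function $g:X\times Y\to Z$, $D(g)$ is the minimal depth of a deterministic two-party protocol computing $g$. In such a protocol, Alice knows $x$ and Bob knows $y$. The protocol is a binary tree: each internal node is labelled by a function of Alice's input only or of Bob's input only, with values in $\{\text{left},\text{right}\}$, and each leaf is labelled by an output value. For $g:\{0,1\}^m\to Z$, set $D(g)=\max_{0\le i<m}D(g_i)$, where $g_i:\{0,1\}^i\times\{0,1\}^{m-i}\to Z$ is $g_i(x,y)=g(xy)$.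 *)

theory Defs
  imports Main
begin

type_synonym config = "int \<Rightarrow> bool"

definition eca_local :: "nat \<Rightarrow> bool \<Rightarrow> bool \<Rightarrow> bool \<Rightarrow> bool" where
  "eca_local N a b c = odd (N div 2 ^ (4 * of_bool a + 2 * of_bool b + of_bool c))"

definition eca :: "nat \<Rightarrow> config \<Rightarrow> config" where
  "eca N x = (\<lambda>i. eca_local N (x (i - 1)) (x i) (x (i + 1)))"

definition per :: "bool list \<Rightarrow> config" where
  "per u = (\<lambda>i. u ! nat (i mod int (length u)))"

definition per_patch :: "bool list \<Rightarrow> bool list \<Rightarrow> config" where
  "per_patch u x = (\<lambda>i. if 0 \<le> i \<and> i < int (length x) then x ! nat i else per u i)"

definition SInv :: "nat \<Rightarrow> bool list \<Rightarrow> bool list \<Rightarrow> bool" where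
  "SInv N u x = (\<exists>w::int. \<forall>t::nat. \<exists>a::int.
      {i. ((eca N ^^ t) (per u)) i \<noteq> ((eca N ^^ t) (per_patch u x)) i} \<subseteq> {a..<a + w})"

datatype ('a, 'b, 'z) protocol =
    Leaf 'z
  | AliceNode "'a \<Rightarrow> bool" "('a, 'b, 'z) protocol" "('a, 'b, 'z) protocol"
  | BobNode "'b \<Rightarrow> bool" "('a, 'b, 'z) protocol" "('a, 'b, 'z) protocol"

fun peval :: "('a, 'b, 'z) protocol \<Rightarrow> 'a \<Rightarrow> 'b \<Rightarrow> 'z" where
  "peval (Leaf z) x y = z"
| "peval (AliceNode f l r) x y = (if f x then peval l x y else peval r x y)"
| "peval (BobNode f l r) x y = (if f y then peval l x y else peval r x y)"

fun pdepth :: "('a, 'b, 'z) protocol \<Rightarrow> nat" where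
  "pdepth (Leaf z) = 0"
| "pdepth (AliceNode f l r) = Suc (max (pdepth l) (pdepth r))"
| "pdepth (BobNode f l r) = Suc (max (pdepth l) (pdepth r))"

definition D_split :: "(bool list \<Rightarrow> 'z) \<Rightarrow> nat \<Rightarrow> nat \<Rightarrow> nat" where
  "D_split g m i = (LEAST d. \<exists>P :: (bool list, bool list, 'z) protocol. pdepth P = d \<and>
      (\<forall>x y. length x = i \<longrightarrow> length y = m - i \<longrightarrow> peval P x y = g (x @ y)))"

definition D_cc :: "(bool list \<Rightarrow> 'z) \<Rightarrow> nat \<Rightarrow> nat" where
  "D_cc g m = Max (insert 0 ((\<lambda>i. D_split g m i) ` {..<m}))"

end

theory Submission
  imports Defs
begin

lemma eca44: "eca 44 z i = ((\<not> z (i-1) \<and> z i) \<or> (z (i-1) \<and> \<not> z i \<and> z (i+1)))"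
  unfolding eca_def eca_local_def
  by (cases "z (i-1)"; cases "z i"; cases "z (i+1)"; simp)

lemma eca_apply: "eca N z i = eca_local N (z (i-1)) (z i) (z (i+1))"
  by (simp add: eca_def)

lemma zero_pair1: "\<not> z j \<Longrightarrow> \<not> z (j+1) \<Longrightarrow> \<not> eca 44 z j \<and> \<not> eca 44 z (j+1)"
  by (simp add: eca44)

lemma zero_pair:
  assumes "\<not> (eca 44 ^^ t) z j" "\<not> (eca 44 ^^ t) z (j+1)" "t \<le> t'"
  shows "\<not> (eca 44 ^^ t') z j \<and> \<not> (eca 44 ^^ t') z (j+1)"
  using assms(3)
proof (induction t' rule: dec_induct)
  case base then show ?case using assms by simp
next
  case (step m) then show ?case using zero_pair1 by simp
qed

lemma light_cone:
  assumes "\<forall>i. i < lo \<or> i \<ge> hi \<longrightarrow> z i = z' i"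
  shows "\<forall>i. i < lo - int t \<or> i \<ge> hi + int t \<longrightarrow> (eca N ^^ t) z i = (eca N ^^ t) z' i"
proof (induction t)
  case 0 then show ?case using assms by simp
next
  case (Suc t)
  show ?case
  proof (intro allI impI)
    fix i assume "i < lo - int (Suc t) \<or> i \<ge> hi + int (Suc t)"
    then have "i-1 < lo - int t \<or> i-1 \<ge> hi + int t" "i < lo - int t \<or> i \<ge> hi + int t"
      "i+1 < lo - int t \<or> i+1 \<ge> hi + int t" by auto
    moreover have e: "\<And>w. (eca N ^^ Suc t) w i = eca_local N ((eca N ^^ t) w (i-1)) ((eca N ^^ t) w i) ((eca N ^^ t) w (i+1))"
      by (simp only: funpow.simps o_apply eca_apply)
    ultimately show "(eca N ^^ Suc t) z i = (eca N ^^ Suc t) z' i"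
    proof -
      assume h: "i - 1 < lo - int t \<or> hi + int t \<le> i - 1" "i < lo - int t \<or> hi + int t \<le> i"
        "i + 1 < lo - int t \<or> hi + int t \<le> i + 1"
      have "(eca N ^^ t) z (i-1) = (eca N ^^ t) z' (i-1)" "(eca N ^^ t) z i = (eca N ^^ t) z' i"
        "(eca N ^^ t) z (i+1) = (eca N ^^ t) z' (i+1)" using Suc.IH h by blast+
      then show ?thesis by (simp only: e)
    qed
  qed
qed

lemma periodic_iter:
  assumes "\<forall>i. z (i + c) = z i"
  shows "\<forall>i. (eca N ^^ t) z (i + c) = (eca N ^^ t) z i"
proof (induction t)
  case 0 then show ?case using assms by simp
next
  case (Suc t)
  show ?case
  proof
    fix i
    have "i + c - 1 = (i - 1) + c" "i + c + 1 = (i + 1) + c" by simp_all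
    moreover have e: "\<And>j. (eca N ^^ Suc t) z j = eca_local N ((eca N ^^ t) z (j-1)) ((eca N ^^ t) z j) ((eca N ^^ t) z (j+1))"
      by (simp only: funpow.simps o_apply eca_apply)
    ultimately show "(eca N ^^ Suc t) z (i + c) = (eca N ^^ Suc t) z i"
    proof -
      assume h: "i + c - 1 = i - 1 + c" "i + c + 1 = i + 1 + c"
      have "(eca N ^^ t) z (i-1+c) = (eca N ^^ t) z (i-1)" "(eca N ^^ t) z (i+c) = (eca N ^^ t) z i"
        "(eca N ^^ t) z (i+1+c) = (eca N ^^ t) z (i+1)" using Suc.IH by blast+
      then show ?thesis by (simp only: e h)
    qed
  qed
qed

lemma periodic_mult_pos:
  assumes "\<forall>i. z (i + c) = z i"
  shows "z (i + int m * c) = z i"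
proof (induction m)
  case 0 then show ?case by simp
next
  case (Suc m)
  have "i + int (Suc m) * c = (i + int m * c) + c" by (simp add: algebra_simps)
  have "z ((i + int m*c) + c) = z (i + int m * c)" using assms by blast
  then show ?case using Suc by (simp add: algebra_simps)
qed

lemma periodic_mult_neg:
  assumes "\<forall>i. z (i + c) = z i"
  shows "z (i - int m * c) = z i"
  using periodic_mult_pos[OF assms, of "i - int m * c" m] by simp

lemma per_periodic: "u \<noteq> [] \<Longrightarrow> \<forall>i. per u (i + int (length u)) = per u i"
  by (simp add: per_def)

lemma walls_step:
  assumes "\<forall>i. i < c1 \<or> i > c2 + 1 \<longrightarrow> z i = z' i"
    "\<not> z c1" "\<not> z (c1+1)" "\<not> z c2" "\<not> z (c2+1)"
    "\<not> z' c1" "\<not> z' (c1+1)" "\<not> z' c2" "\<not> z' (c2+1)"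
  shows "\<forall>i. i < c1 \<or> i > c2 + 1 \<longrightarrow> eca 44 z i = eca 44 z' i"
proof (intro allI impI)
  fix i assume h: "i < c1 \<or> i > c2 + 1"
  have "z (i-1) = z' (i-1)" "z i = z' i" "z (i+1) = z' (i+1)"
  proof -
    show "z (i-1) = z' (i-1)"
    proof (cases "i - 1 = c2 + 1")
      case True
      then have "z (i-1) = z (c2+1)" "z' (i-1) = z' (c2+1)" by (simp_all add: add.commute)
      then show ?thesis using assms by simp
    next
      case False then show ?thesis using h assms by auto
    qed
    show "z i = z' i" using h assms by auto
    show "z (i+1) = z' (i+1)"
    proof (cases "i + 1 = c1")
      case True then show ?thesis using assms by simp
    next
      case False then show ?thesis using h assms by auto
    qed
  qed
  then show "eca 44 z i = eca 44 z' i" by (simp only: eca_apply)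
qed

lemma walls:
  assumes "\<forall>i. i < c1 \<or> i > c2 + 1 \<longrightarrow> z i = z' i"
    "\<not> z c1" "\<not> z (c1+1)" "\<not> z c2" "\<not> z (c2+1)"
    "\<not> z' c1" "\<not> z' (c1+1)" "\<not> z' c2" "\<not> z' (c2+1)"
  shows "\<forall>i. i < c1 \<or> i > c2 + 1 \<longrightarrow> (eca 44 ^^ m) z i = (eca 44 ^^ m) z' i"
proof -
  have "(\<forall>i. i < c1 \<or> i > c2 + 1 \<longrightarrow> (eca 44 ^^ m) z i = (eca 44 ^^ m) z' i) \<and>
    \<not> (eca 44 ^^ m) z c1 \<and> \<not> (eca 44 ^^ m) z (c1+1) \<and> \<not> (eca 44 ^^ m) z c2 \<and> \<not> (eca 44 ^^ m) z (c2+1) \<and>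
    \<not> (eca 44 ^^ m) z' c1 \<and> \<not> (eca 44 ^^ m) z' (c1+1) \<and> \<not> (eca 44 ^^ m) z' c2 \<and> \<not> (eca 44 ^^ m) z' (c2+1)"
  proof (induction m)
    case 0 then show ?case using assms by simp
  next
    case (Suc m)
    then show ?case using walls_step[of c1 c2 "(eca 44 ^^ m) z" "(eca 44 ^^ m) z'"]
        zero_pair1[of "(eca 44 ^^ m) z" c1] zero_pair1[of "(eca 44 ^^ m) z" c2]
        zero_pair1[of "(eca 44 ^^ m) z'" c1] zero_pair1[of "(eca 44 ^^ m) z'" c2]
      by simp
  qed
  then show ?thesis by blast
qed

lemma caseB:
  assumes per: "\<forall>i. p (i + L) = p i" and L: "L > 0"
  and k: "\<not> (eca 44 ^^ k) p i0" "\<not> (eca 44 ^^ k) p (i0+1)"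
  and agree: "\<forall>i. i < 0 \<or> i \<ge> n \<longrightarrow> y i = p i"
  shows "\<exists>w::int. \<forall>t::nat. \<exists>a::int. {i. (eca 44 ^^ t) p i \<noteq> (eca 44 ^^ t) y i} \<subseteq> {a..<a+w}"
proof -
  have pk: "\<forall>i. (eca 44 ^^ k) p (i + L) = (eca 44 ^^ k) p i" using periodic_iter[OF per] by blast
  define m1 where "m1 = nat \<bar>i0\<bar> + k + 2"
  define m2 where "m2 = nat \<bar>i0\<bar> + nat \<bar>n\<bar> + k"
  define c1 where "c1 = i0 - int m1 * L"
  define c2 where "c2 = i0 + int m2 * L"
  have "int m1 * 1 \<le> int m1 * L" using L by (intro mult_left_mono) auto
  then have c1le: "c1 \<le> - int k - 2" unfolding c1_def m1_def by simp
  have "int m2 * 1 \<le> int m2 * L" using L by (intro mult_left_mono) auto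
  then have c2ge: "c2 \<ge> n + int k" unfolding c2_def m2_def by simp
  have pc1: "\<not> (eca 44 ^^ k) p c1" "\<not> (eca 44 ^^ k) p (c1+1)"
    using periodic_mult_neg[OF pk, of i0 m1] periodic_mult_neg[OF pk, of "i0+1" m1] k
    unfolding c1_def by (simp_all add: algebra_simps)
  have pc2: "\<not> (eca 44 ^^ k) p c2" "\<not> (eca 44 ^^ k) p (c2+1)"
    using periodic_mult_pos[OF pk, of i0 m2] periodic_mult_pos[OF pk, of "i0+1" m2] k
    unfolding c2_def by (simp_all add: algebra_simps)
  have lc: "\<And>t. \<forall>i. i < 0 - int t \<or> i \<ge> n + int t \<longrightarrow> (eca 44 ^^ t) y i = (eca 44 ^^ t) p i"
    using light_cone[OF agree] by blast
  have yc: "\<not> (eca 44 ^^ k) y c1" "\<not> (eca 44 ^^ k) y (c1+1)"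
     "\<not> (eca 44 ^^ k) y c2" "\<not> (eca 44 ^^ k) y (c2+1)"
    using lc[of k] pc1 pc2 c1le c2ge by auto
  have agk: "\<forall>i. i < c1 \<or> i > c2 + 1 \<longrightarrow> (eca 44 ^^ k) y i = (eca 44 ^^ k) p i"
    using lc[of k] c1le c2ge by auto
  show ?thesis
  proof (intro exI allI)
    fix t :: nat
    show "{i. (eca 44 ^^ t) p i \<noteq> (eca 44 ^^ t) y i} \<subseteq> {c1..<c1 + (c2 + 2 - c1)}"
    proof (cases "t \<le> k")
      case True
      show ?thesis
      proof
        fix i assume "i \<in> {i. (eca 44 ^^ t) p i \<noteq> (eca 44 ^^ t) y i}"
        then have "(eca 44 ^^ t) y i \<noteq> (eca 44 ^^ t) p i" by simp
        then have "\<not> (i < 0 - int t \<or> n + int t \<le> i)" using lc[of t] by metis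
        then show "i \<in> {c1..<c1 + (c2 + 2 - c1)}" using True c1le c2ge by auto
      qed
    next
      case False
      then obtain m where tm: "t = m + k" by (metis add.commute le_add_diff_inverse nat_le_linear)
      have "\<forall>i. i < c1 \<or> i > c2 + 1 \<longrightarrow> (eca 44 ^^ m) ((eca 44 ^^ k) y) i = (eca 44 ^^ m) ((eca 44 ^^ k) p) i"
        by (rule walls[OF agk yc pc1 pc2])
      then have "\<forall>i. i < c1 \<or> i > c2 + 1 \<longrightarrow> (eca 44 ^^ t) y i = (eca 44 ^^ t) p i"
        unfolding tm funpow_add by simp
      then show ?thesis by force
    qed
  qed
qed

definition P44 :: "config \<Rightarrow> bool" where
  "P44 q = (\<forall>i. (q i \<or> q (i+1)) \<and> \<not>(q i \<and> q (i+1) \<and> q (i+2)) \<and> \<not>(\<not> q i \<and> q (i+1) \<and> \<not> q (i+2)))"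

lemma noP:
  assumes "\<not> P44 z"
  shows "\<exists>k\<le>2. \<exists>i. \<not> (eca 44 ^^ k) z i \<and> \<not> (eca 44 ^^ k) z (i+1)"
proof -
  obtain i where hi: "\<not> ((z i \<or> z (i+1)) \<and> \<not>(z i \<and> z (i+1) \<and> z (i+2)) \<and> \<not>(\<not> z i \<and> z (i+1) \<and> \<not> z (i+2)))"
    using assms unfolding P44_def by blast
  consider (a) "\<not> z i \<and> \<not> z (i+1)" | (b) "z i \<and> z (i+1) \<and> z (i+2)" | (c) "\<not> z i \<and> z (i+1) \<and> \<not> z (i+2)"
    using hi by blast
  then show ?thesis
  proof cases
    case a then show ?thesis by (auto intro!: exI[of _ "0::nat"])
  next
    case b
    have "\<not> eca 44 z (i+1) \<and> \<not> eca 44 z (i+1+1)" using b by (simp add: eca44 algebra_simps)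
    then show ?thesis by (auto intro!: exI[of _ "1::nat"])
  next
    case c
    show ?thesis
    proof (cases "z (i-1)")
      case False then show ?thesis using c by (auto intro!: exI[of _ "0::nat"] exI[of _ "i-1"])
    next
      case True
      show ?thesis
      proof (cases "z (i+3)")
        case False then show ?thesis using c by (auto intro!: exI[of _ "0::nat"] exI[of _ "i+2"] simp: add.assoc)
      next
        case True2: True
        have f1: "eca 44 z i" "eca 44 z (i+1)" "eca 44 z (i+2)"
          using c True True2 by (simp_all add: eca44 algebra_simps)
        have "\<not> eca 44 (eca 44 z) (i+1) \<and> \<not> eca 44 (eca 44 z) (i+1+1)"
          using f1 by (simp add: eca44[of "eca 44 z"] algebra_simps)
        then have "\<not> (eca 44 ^^ 2) z (i+1) \<and> \<not> (eca 44 ^^ 2) z (i+1+1)"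
          by (simp add: numeral_2_eq_2)
        then show ?thesis by (auto intro!: exI[of _ "2::nat"])
      qed
    qed
  qed
qed

lemma P44_at:
  assumes "P44 q"
  shows "(q i \<or> q (i+1)) \<and> \<not>(q i \<and> q (i+1) \<and> q (i+2)) \<and> \<not>(\<not> q i \<and> q (i+1) \<and> \<not> q (i+2))"
  using assms unfolding P44_def by blast

lemma P44_per:
  assumes "P44 q"
  shows "q (i+3) = q i"
proof -
  have a: "(q i \<or> q (i+1)) \<and> \<not>(q i \<and> q (i+1) \<and> q (i+2)) \<and> \<not>(\<not> q i \<and> q (i+1) \<and> \<not> q (i+2))"
    using P44_at[OF assms] by blast
  have b: "(q (i+1) \<or> q (i+2)) \<and> \<not>(q (i+1) \<and> q (i+2) \<and> q (i+3)) \<and> \<not>(\<not> q (i+1) \<and> q (i+2) \<and> \<not> q (i+3))"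
    using P44_at[OF assms, of "i+1"] by (simp add: add.assoc)
  have c: "q (i+2) \<or> q (i+3)" using P44_at[OF assms, of "i+2"] by (simp add: add.assoc)
  show ?thesis using a b c by blast
qed

lemma P44_shift:
  assumes "P44 q"
  shows "eca 44 q = (\<lambda>i. q (i+1))"
proof
  fix i
  have "(q (i-1) \<or> q i) \<and> \<not>(q (i-1) \<and> q i \<and> q (i+1)) \<and> \<not>(\<not> q (i-1) \<and> q i \<and> \<not> q (i+1))"
    using P44_at[OF assms, of "i-1"] by (simp add: algebra_simps)
  then show "eca 44 q i = q (i+1)" by (auto simp add: eca44)
qed

lemma P44_shiftP:
  assumes "P44 q"
  shows "P44 (\<lambda>i. q (i + c))"
  unfolding P44_def
proof
  fix i
  show "(q (i + c) \<or> q (i + 1 + c)) \<and> \<not> (q (i + c) \<and> q (i + 1 + c) \<and> q (i + 2 + c)) \<and>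
         \<not> (\<not> q (i + c) \<and> q (i + 1 + c) \<and> \<not> q (i + 2 + c))"
    using P44_at[OF assms, of "i+c"] by (simp add: algebra_simps)
qed

lemma P44_iter:
  assumes "P44 q"
  shows "(eca 44 ^^ t) q = (\<lambda>i. q (i + int t))"
  using assms
proof (induction t arbitrary: q)
  case 0 then show ?case by simp
next
  case (Suc t)
  have "(eca 44 ^^ Suc t) q = (eca 44 ^^ t) (eca 44 q)" by (simp only: funpow_Suc_right o_apply)
  also have "\<dots> = (eca 44 ^^ t) (\<lambda>i. q (i+1))" using P44_shift[OF Suc.prems] by simp
  also have "\<dots> = (\<lambda>i. q (i + int t + 1))" using Suc.IH[OF P44_shiftP[OF Suc.prems, of 1]] by simp
  finally show ?case by (simp add: algebra_simps)
qed

lemma step_left: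
  assumes "\<not> z j" "\<not> z (j+1)"
  shows "\<exists>m. \<exists>j'\<le>j-1. \<not> (eca 44 ^^ m) z j' \<and> \<not> (eca 44 ^^ m) z (j'+1)"
proof (cases "z (j-1)")
  case False then show ?thesis using assms by (auto intro!: exI[of _ "0::nat"] exI[of _ "j-1"])
next
  case T1: True
  show ?thesis
  proof (cases "z (j-2)")
    case True
    have "\<not> eca 44 z (j-1) \<and> \<not> eca 44 z (j-1+1)" using T1 True assms by (simp add: eca44)
    then show ?thesis by (auto intro!: exI[of _ "1::nat"] exI[of _ "j-1"])
  next
    case F2: False
    show ?thesis
    proof (cases "z (j-3)")
      case False
      have "j - 3 + 1 = j - 2" by simp
      then show ?thesis using F2 False by (auto intro!: exI[of _ "0::nat"] exI[of _ "j-3"])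
    next
      case T3: True
      have g: "eca 44 z (j-2)" "eca 44 z (j-1)" "\<not> eca 44 z j" "\<not> eca 44 z (j+1)"
        using T1 F2 T3 assms by (simp_all add: eca44 algebra_simps)
      have "\<not> eca 44 (eca 44 z) (j-1) \<and> \<not> eca 44 (eca 44 z) (j-1+1)"
        using g by (simp add: eca44[of "eca 44 z"] algebra_simps)
      then have "\<not> (eca 44 ^^ 2) z (j-1) \<and> \<not> (eca 44 ^^ 2) z (j-1+1)" by (simp add: numeral_2_eq_2)
      then show ?thesis by (auto intro!: exI[of _ "2::nat"] exI[of _ "j-1"])
    qed
  qed
qed

lemma far_left:
  assumes "\<not> (eca 44 ^^ t0) y i0" "\<not> (eca 44 ^^ t0) y (i0+1)"
  shows "\<exists>t\<ge>t0. \<exists>j \<le> i0 - int s. \<not> (eca 44 ^^ t) y j \<and> \<not> (eca 44 ^^ t) y (j+1)"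
proof (induction s)
  case 0 then show ?case using assms by auto
next
  case (Suc s)
  then obtain t j where tj: "t \<ge> t0" "j \<le> i0 - int s" "\<not> (eca 44 ^^ t) y j" "\<not> (eca 44 ^^ t) y (j+1)" by blast
  obtain m j' where mj: "j' \<le> j - 1" "\<not> (eca 44 ^^ m) ((eca 44 ^^ t) y) j'" "\<not> (eca 44 ^^ m) ((eca 44 ^^ t) y) (j'+1)"
    using step_left[OF tj(3,4)] by blast
  then have "\<not> (eca 44 ^^ (m+t)) y j'" "\<not> (eca 44 ^^ (m+t)) y (j'+1)" by (simp_all add: funpow_add)
  moreover have "m + t \<ge> t0" "j' \<le> i0 - int (Suc s)" using tj mj by auto
  ultimately show ?case by blast
qed

lemma per3_mult:
  assumes "\<And>i. q (i+3) = q i"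
  shows "q (i - 3 * int m) = q i"
  using periodic_mult_neg[of q 3 i m] assms by (simp add: mult.commute)

lemma caseA:
  assumes PA: "P44 (per u)"
  shows "SInv 44 u x \<longleftrightarrow> (\<forall>k<length x. x!k = per u (int k))"
proof
  assume pre: "\<forall>k<length x. x!k = per u (int k)"
  have "per_patch u x = per u"
  proof
    fix i
    show "per_patch u x i = per u i"
    proof (cases "0 \<le> i \<and> i < int (length x)")
      case True
      then have "x ! nat i = per u (int (nat i))" using pre by auto
      then show ?thesis using True by (simp add: per_patch_def)
    next
      case False then show ?thesis by (auto simp add: per_patch_def)
    qed
  qed
  then show "SInv 44 u x" unfolding SInv_def by auto
next
  assume S: "SInv 44 u x"
  show "\<forall>k<length x. x!k = per u (int k)"
  proof (rule ccontr)
    assume "\<not> (\<forall>k<length x. x!k = per u (int k))"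
    then obtain k0 where k0: "k0 < length x" "x!k0 \<noteq> per u (int k0)" by blast
    define p where "p = per u"
    define y where "y = per_patch u x"
    have yout: "\<And>i. i < 0 \<Longrightarrow> y i = p i" unfolding y_def p_def per_patch_def by simp
    have "\<not> P44 y"
    proof
      assume Py: "P44 y"
      define m where "m = k0 + 1"
      have lt: "int k0 - 3 * int m < 0" unfolding m_def by simp
      have "y (int k0) = y (int k0 - 3 * int m)" using per3_mult[of y] P44_per[OF Py] by metis
      also have "\<dots> = p (int k0 - 3 * int m)" using yout lt by simp
      also have "\<dots> = p (int k0)" using per3_mult[of p] P44_per[OF PA[folded p_def]] by metis
      finally have "y (int k0) = p (int k0)" .
      moreover have "y (int k0) = x ! k0" using k0 unfolding y_def per_patch_def by simp
      ultimately show False using k0 unfolding p_def by simp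
    qed
    then obtain k i0 where ki: "k \<le> 2" "\<not> (eca 44 ^^ k) y i0" "\<not> (eca 44 ^^ k) y (i0+1)"
      using noP by blast
    obtain w where w: "\<forall>t::nat. \<exists>a::int. {i. (eca 44 ^^ t) p i \<noteq> (eca 44 ^^ t) y i} \<subseteq> {a..<a + w}"
      using S unfolding SInv_def p_def y_def by blast
    define s where "s = nat w + 2"
    obtain t j where tj: "t \<ge> k" "j \<le> i0 - int s" "\<not> (eca 44 ^^ t) y j" "\<not> (eca 44 ^^ t) y (j+1)"
      using far_left[OF ki(2,3), of s] by blast
    have t0: "\<not> (eca 44 ^^ t) y i0" "\<not> (eca 44 ^^ t) y (i0+1)" using zero_pair[OF ki(2,3) tj(1)] by auto
    have pt: "(eca 44 ^^ t) p = (\<lambda>i. p (i + int t))" using P44_iter[OF PA[folded p_def]] by simp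
    have "p (j + int t) \<or> p (j + int t + 1)" using P44_at[OF PA[folded p_def], of "j + int t"] by simp
    then have "(eca 44 ^^ t) p j \<or> (eca 44 ^^ t) p (j+1)" using pt by (simp add: algebra_simps)
    then obtain d1 where d1: "d1 \<le> j + 1" "(eca 44 ^^ t) p d1 \<noteq> (eca 44 ^^ t) y d1"
      using tj(3,4) by (metis order.refl add_increasing2 le_add_same_cancel1 zero_le_one)
    have "p (i0 + int t) \<or> p (i0 + int t + 1)" using P44_at[OF PA[folded p_def], of "i0 + int t"] by simp
    then have "(eca 44 ^^ t) p i0 \<or> (eca 44 ^^ t) p (i0+1)" using pt by (simp add: algebra_simps)
    then obtain d2 where d2: "d2 \<ge> i0" "(eca 44 ^^ t) p d2 \<noteq> (eca 44 ^^ t) y d2"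
      using t0 by (metis order.refl le_add_same_cancel1 zero_le_one)
    obtain a where a: "{i. (eca 44 ^^ t) p i \<noteq> (eca 44 ^^ t) y i} \<subseteq> {a..<a + w}" using w by blast
    have "a \<le> d1" "d2 < a + w" using a d1(2) d2(2) by auto
    then show False using d1(1) d2(1) tj(2) unfolding s_def by linarith
  qed
qed

lemma D_cc_le:
  assumes "\<forall>i<m. \<exists>P :: (bool list, bool list, 'z) protocol. pdepth P \<le> c \<and>
      (\<forall>x y. length x = i \<longrightarrow> length y = m - i \<longrightarrow> peval P x y = g (x @ y))"
  shows "D_cc g m \<le> c"
proof -
  have "\<forall>i<m. D_split g m i \<le> c"
  proof (intro allI impI)
    fix i assume "i < m"
    then obtain P :: "(bool list, bool list, 'z) protocol" where P: "pdepth P \<le> c"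
      "\<forall>x y. length x = i \<longrightarrow> length y = m - i \<longrightarrow> peval P x y = g (x @ y)" using assms by blast
    have "D_split g m i \<le> pdepth P" unfolding D_split_def by (rule Least_le) (use P in blast)
    then show "D_split g m i \<le> c" using P by simp
  qed
  then show ?thesis unfolding D_cc_def by (auto simp add: Max_le_iff)
qed

lemma prefix_append:
  "(\<forall>k<length (x @ y). (x @ y) ! k = p (int k)) \<longleftrightarrow>
   (\<forall>k<length x. x ! k = p (int k)) \<and> (\<forall>k<length y. y ! k = p (int (length x + k)))"
proof safe
  fix k assume "\<forall>k<length (x @ y). (x @ y) ! k = p (int k)" "k < length x"
  then show "x ! k = p (int k)" by (metis length_append nth_append trans_less_add1)
next
  fix k assume "\<forall>k<length (x @ y). (x @ y) ! k = p (int k)" "k < length y"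
  then show "y ! k = p (int (length x + k))" by (metis add_less_cancel_left length_append nth_append_length_plus)
next
  fix k assume a: "\<forall>k<length x. x ! k = p (int k)" "\<forall>k<length y. y ! k = p (int (length x + k))"
    "k < length (x @ y)"
  then show "(x @ y) ! k = p (int k)"
    by (cases "k < length x") (auto simp: nth_append)
qed

theorem mainTheorem13:
  fixes u :: "bool list"
  assumes "u \<noteq> []"
  shows "\<exists>C::nat. \<forall>n::nat. D_cc (SInv 44 u) n \<le> C"
proof (intro exI allI)
  fix n :: nat
  show "D_cc (SInv 44 u) n \<le> 2"
  proof (cases "P44 (per u)")
    case True
    show ?thesis
    proof (rule D_cc_le, intro allI impI)
      fix i assume "i < n"
      let ?P = "AliceNode (\<lambda>x. \<forall>k<length x. x ! k = per u (int k))
        (BobNode (\<lambda>y. \<forall>k<length y. y ! k = per u (int (i + k))) (Leaf True) (Leaf False)) (Leaf False)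
        :: (bool list, bool list, bool) protocol"
      have "pdepth ?P \<le> 2" by simp
      moreover have "\<forall>x y. length x = i \<longrightarrow> length y = n - i \<longrightarrow> peval ?P x y = SInv 44 u (x @ y)"
      proof (intro allI impI)
        fix x y :: "bool list" assume lx: "length x = i" and "length y = n - i"
        have "SInv 44 u (x @ y) = (\<forall>k<length (x @ y). (x @ y) ! k = per u (int k))"
          by (rule caseA[OF True])
        also have "\<dots> = ((\<forall>k<length x. x ! k = per u (int k)) \<and> (\<forall>k<length y. y ! k = per u (int (length x + k))))"
          by (rule prefix_append)
        finally show "peval ?P x y = SInv 44 u (x @ y)" using lx by simp
      qed
      ultimately show "\<exists>P :: (bool list, bool list, bool) protocol. pdepth P \<le> 2 \<and>
          (\<forall>x y. length x = i \<longrightarrow> length y = n - i \<longrightarrow> peval P x y = SInv 44 u (x @ y))" by blast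
    qed
  next
    case False
    obtain k i0 where ki: "\<not> (eca 44 ^^ k) (per u) i0" "\<not> (eca 44 ^^ k) (per u) (i0+1)"
      using noP[OF False] by blast
    have all: "SInv 44 u z" for z
    proof -
      have "\<forall>i. i < 0 \<or> i \<ge> int (length z) \<longrightarrow> per_patch u z i = per u i"
        by (auto simp: per_patch_def)
      from caseB[OF per_periodic[OF assms] _ ki this] assms
      show ?thesis unfolding SInv_def by simp
    qed
    show ?thesis
    proof (rule D_cc_le, intro allI impI)
      fix i assume "i < n"
      show "\<exists>P :: (bool list, bool list, bool) protocol. pdepth P \<le> 2 \<and>
          (\<forall>x y. length x = i \<longrightarrow> length y = n - i \<longrightarrow> peval P x y = SInv 44 u (x @ y))"
        by (rule exI[of _ "Leaf True"]) (simp add: all)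
    qed
  qed
qed

end
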